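(* Let a group $G$ act on a connected weighted simplicial complex $\Omega$ on $[n]$, and let $\mathcal V=\mathcal V_0\otimes\cdots\otimes\mathcal V_n$ with complex vector spaces $\mathcal V_i$ such that $\mathcal V_i=\mathcal V_j$ whenever $i,j$ lie in the same $G$-orbit. Then for all $v,w\in\mathcal V$: (i) ${\rm rank}_{(\Omega,G)}(v+w)\leq{\rm rank}_{(\Omega,G)}(v)+{\rm rank}_{(\Omega,G)}(w)$; (ii) if all $\mathcal V_i$ are algebras (and $\mathcal V$ carries the tensor product algebra structure), then ${\rm rank}_{(\Omega,G)}(vw)\leq{\rm rank}_{(\Omega,G)}(v)\cdot{\rm rank}_{(\Omega,G)}(w)$.
   Context: $[n]=\{0,\ldots,n\}$. A weighted simplicial complex (wsc) on $[n]$ is a function $\Omega\colon\mathcal P([n])\to\mathbb N=\{0,1,\ldots\}$ such that $S_1\subseteq S_2$ implies $\Omega(S_1)\mid\Omega(S_2)$; simplices are sets with $\Omega(S)\neq0$, every singleton is assumed to be a simplex, facets are inclusion-maximal simplices, $\mathcal F$ is the set of facets. $\widetilde{\mathcal F}$ is the multiset containing each facet $F$ exactly $\Omega(F)$ times, with collapse map $c\colon\widetilde{\mathcal F}\to\mathcal F$; $\widetilde{\mathcal F}_i\subseteq\widetilde{\mathcal F}$ consists of the copies of facets containing $i$. $\Omega$ is connected if any two vertices are joined by a chain of vertices in which consecutive ones lie in a common facet. A group action of $G$ on $\Omega$ is an action of $G$ on $[n]$ with $\Omega(gS)=\Omega(S)$ for all $S,g$, together with an action of $G$ on $\widetilde{\mathcal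 F}$ such that $c(gx)=gc(x)$; $g$ maps $\widetilde{\mathcal F}_i$ onto $\widetilde{\mathcal F}_{gi}$. For $\beta\colon\widetilde{\mathcal F}_i\to\mathcal I$, ${}^g\beta\colon\widetilde{\mathcal F}_{gi}\to\mathcal I$ is $x\mapsto\beta(g^{-1}x)$; $\alpha_{\mid i}$ denotes restriction of $\alpha\colon\widetilde{\mathcal F}\to\mathcal I$ to $\widetilde{\mathcal F}_i$. An $(\Omega,G)$-decomposition of $v\in\mathcal V$ consists of a finite set $\mathcal I$ and local vectors $v^{[i]}_\beta\in\mathcal V_i$ ($i\in[n]$, $\beta\in\mathcal I^{\widetilde{\mathcal F}_i}$) with (a) $v=\sum_{\alpha\in\mathcal I^{\widetilde{\mathcal F}}}v^{[0]}_{\alpha_{\mid0}}\otimes\cdots\otimes v^{[n]}_{\alpha_{\mid n}}$ and (b) $v^{[i]}_\beta=v^{[gi]}_{{}^g\beta}$ for all $i,g,\beta$. ${\rm rank}_{(\Omega,G)}(v)$ is the minimal $|\mathcal I|$ ($\infty$ if no decomposition exists, with the usual conventions for $\infty$ in sums and products). *)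

theory Defs
  imports Complex_Main "HOL-Algebra.Group_Action" "HOL-Library.Extended_Nat"
begin

text \<open>Weighted simplicial complex on [n] = {0..n}: Omega :: nat set => nat
  (only its values on subsets of {0..n} matter).\<close>
definition wsc :: "nat \<Rightarrow> (nat set \<Rightarrow> nat) \<Rightarrow> bool" where
  "wsc n \<Omega> \<longleftrightarrow>
     (\<forall>S1 S2. S1 \<subseteq> S2 \<and> S2 \<subseteq> {0..n} \<longrightarrow> \<Omega> S1 dvd \<Omega> S2) \<and>
     (\<forall>i\<in>{0..n}. \<Omega> {i} \<noteq> 0)"

definition facets :: "nat \<Rightarrow> (nat set \<Rightarrow> nat) \<Rightarrow> nat set set" where
  "facets n \<Omega> = {F. F \<subseteq> {0..n} \<and> \<Omega> F \<noteq> 0 \<and>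
      (\<forall>T. F \<subset> T \<and> T \<subseteq> {0..n} \<longrightarrow> \<Omega> T = 0)}"

text \<open>The multiset of facets: facet F occurs as the copies (F,k), k < Omega F.
  The collapse map is fst.\<close>
definition mfacets :: "nat \<Rightarrow> (nat set \<Rightarrow> nat) \<Rightarrow> (nat set \<times> nat) set" where
  "mfacets n \<Omega> = {(F, k). F \<in> facets n \<Omega> \<and> k < \<Omega> F}"

definition mfacets_at :: "nat \<Rightarrow> (nat set \<Rightarrow> nat) \<Rightarrow> nat \<Rightarrow> (nat set \<times> nat) set" where
  "mfacets_at n \<Omega> i = {x \<in> mfacets n \<Omega>. i \<in> fst x}"

definition wsc_connected :: "nat \<Rightarrow> (nat set \<Rightarrow> nat) \<Rightarrow> bool" where
  "wsc_connected n \<Omega> \<longleftrightarrow>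
     (\<forall>i\<in>{0..n}. \<forall>j\<in>{0..n}.
        (i, j) \<in> {(a, b). \<exists>F\<in>facets n \<Omega>. a \<in> F \<and> b \<in> F}\<^sup>*)"

definition wsc_action ::
  "nat \<Rightarrow> (nat set \<Rightarrow> nat) \<Rightarrow> ('g, 'm) monoid_scheme \<Rightarrow> ('g \<Rightarrow> nat \<Rightarrow> nat)
     \<Rightarrow> ('g \<Rightarrow> (nat set \<times> nat) \<Rightarrow> (nat set \<times> nat)) \<Rightarrow> bool" where
  "wsc_action n \<Omega> G \<phi> \<psi> \<longleftrightarrow>
     group_action G {0..n} \<phi> \<and>
     group_action G (mfacets n \<Omega>) \<psi> \<and>
     (\<forall>g\<in>carrier G. \<forall>S. S \<subseteq> {0..n} \<longrightarrow> \<Omega> (\<phi> g ` S) = \<Omega> S) \<and>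
     (\<forall>g\<in>carrier G. \<forall>x\<in>mfacets n \<Omega>. fst (\<psi> g x) = \<phi> g ` fst x)"

text \<open>Complex vector spaces are modelled through a basis: the local space with basis
  B is the space of finitely supported functions B -> complex.  The tensor product
  V_0 (x) ... (x) V_n is the space of finitely supported functions on the product
  of the bases (extensional tuples).\<close>
definition loc_space :: "'b set \<Rightarrow> ('b \<Rightarrow> complex) set" where
  "loc_space B = {f. finite {b. f b \<noteq> 0} \<and> {b. f b \<noteq> 0} \<subseteq> B}"

definition tensor_space :: "nat \<Rightarrow> (nat \<Rightarrow> 'b set) \<Rightarrow> ((nat \<Rightarrow> 'b) \<Rightarrow> complex) set" where
  "tensor_space n B = {v. finite {x. v x \<noteq> 0} \<and> {x. v x \<noteq> 0} \<subseteq> PiE {0..n} B}"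

definition tprod :: "nat \<Rightarrow> (nat \<Rightarrow> 'b set) \<Rightarrow> (nat \<Rightarrow> 'b \<Rightarrow> complex) \<Rightarrow> (nat \<Rightarrow> 'b) \<Rightarrow> complex" where
  "tprod n B u = (\<lambda>x. if x \<in> PiE {0..n} B then (\<Prod>i\<in>{0..n}. u i (x i)) else 0)"

definition is_decomp ::
  "nat \<Rightarrow> (nat set \<Rightarrow> nat) \<Rightarrow> ('g, 'm) monoid_scheme \<Rightarrow> ('g \<Rightarrow> nat \<Rightarrow> nat)
     \<Rightarrow> ('g \<Rightarrow> (nat set \<times> nat) \<Rightarrow> (nat set \<times> nat)) \<Rightarrow> (nat \<Rightarrow> 'b set)
     \<Rightarrow> ((nat \<Rightarrow> 'b) \<Rightarrow> complex) \<Rightarrow> nat set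
     \<Rightarrow> (nat \<Rightarrow> ((nat set \<times> nat) \<Rightarrow> nat) \<Rightarrow> 'b \<Rightarrow> complex) \<Rightarrow> bool" where
  "is_decomp n \<Omega> G \<phi> \<psi> B v I loc \<longleftrightarrow>
     finite I \<and>
     (\<forall>i\<in>{0..n}. \<forall>\<beta>\<in>mfacets_at n \<Omega> i \<rightarrow>\<^sub>E I. loc i \<beta> \<in> loc_space (B i)) \<and>
     v = (\<lambda>x. \<Sum>\<alpha>\<in>mfacets n \<Omega> \<rightarrow>\<^sub>E I.
              tprod n B (\<lambda>i. loc i (restrict \<alpha> (mfacets_at n \<Omega> i))) x) \<and>
     (\<forall>i\<in>{0..n}. \<forall>g\<in>carrier G. \<forall>\<beta>\<in>mfacets_at n \<Omega> i \<rightarrow>\<^sub>E I.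
        loc i \<beta> = loc (\<phi> g i)
           (\<lambda>x\<in>mfacets_at n \<Omega> (\<phi> g i). \<beta> (\<psi> (inv\<^bsub>G\<^esub> g) x)))"

definition decomp_rank ::
  "nat \<Rightarrow> (nat set \<Rightarrow> nat) \<Rightarrow> ('g, 'm) monoid_scheme \<Rightarrow> ('g \<Rightarrow> nat \<Rightarrow> nat)
     \<Rightarrow> ('g \<Rightarrow> (nat set \<times> nat) \<Rightarrow> (nat set \<times> nat)) \<Rightarrow> (nat \<Rightarrow> 'b set)
     \<Rightarrow> ((nat \<Rightarrow> 'b) \<Rightarrow> complex) \<Rightarrow> enat" where
  "decomp_rank n \<Omega> G \<phi> \<psi> B v =
     (INF I\<in>{I. \<exists>loc. is_decomp n \<Omega> G \<phi> \<psi> B v I loc}. enat (card I))"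

definition cplx_algebra :: "('b \<Rightarrow> complex) set \<Rightarrow> (('b \<Rightarrow> complex) \<Rightarrow> ('b \<Rightarrow> complex) \<Rightarrow> ('b \<Rightarrow> complex)) \<Rightarrow> bool" where
  "cplx_algebra S m \<longleftrightarrow>
     (\<forall>a\<in>S. \<forall>b\<in>S. m a b \<in> S) \<and>
     (\<forall>a\<in>S. \<forall>b\<in>S. \<forall>c\<in>S. m (\<lambda>x. a x + b x) c = (\<lambda>x. m a c x + m b c x)) \<and>
     (\<forall>a\<in>S. \<forall>b\<in>S. \<forall>c\<in>S. m a (\<lambda>x. b x + c x) = (\<lambda>x. m a b x + m a c x)) \<and>
     (\<forall>s. \<forall>a\<in>S. \<forall>b\<in>S. m (\<lambda>x. s * a x) b = (\<lambda>x. s * m a b x)) \<and>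
     (\<forall>s. \<forall>a\<in>S. \<forall>b\<in>S. m a (\<lambda>x. s * b x) = (\<lambda>x. s * m a b x)) \<and>
     (\<forall>a\<in>S. \<forall>b\<in>S. \<forall>c\<in>S. m (m a b) c = m a (m b c))"

definition basis_vec :: "'b \<Rightarrow> 'b \<Rightarrow> complex" where
  "basis_vec b = (\<lambda>c. if c = b then 1 else 0)"

text \<open>Tensor product algebra multiplication: bilinear extension of
  (e_y0 (x) ... (x) e_yn)(e_z0 (x) ... (x) e_zn) = (e_y0 e_z0) (x) ... (x) (e_yn e_zn).\<close>
definition tensor_mult ::
  "nat \<Rightarrow> (nat \<Rightarrow> 'b set) \<Rightarrow> (nat \<Rightarrow> ('b \<Rightarrow> complex) \<Rightarrow> ('b \<Rightarrow> complex) \<Rightarrow> ('b \<Rightarrow> complex))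
     \<Rightarrow> ((nat \<Rightarrow> 'b) \<Rightarrow> complex) \<Rightarrow> ((nat \<Rightarrow> 'b) \<Rightarrow> complex) \<Rightarrow> ((nat \<Rightarrow> 'b) \<Rightarrow> complex)" where
  "tensor_mult n B m v w = (\<lambda>x. \<Sum>y\<in>{y. v y \<noteq> 0}. \<Sum>z\<in>{z. w z \<noteq> 0}.
       v y * w z * tprod n B (\<lambda>i. m i (basis_vec (y i)) (basis_vec (z i))) x)"

end

theory Submission
  imports Defs
begin


lemma facet_props: "F \<in> facets n \<Omega> \<Longrightarrow> F \<subseteq> {0..n} \<and> \<Omega> F \<noteq> 0"
  by (simp add: facets_def)

lemma facet_nonempty: assumes "wsc n \<Omega>" "F \<in> facets n \<Omega>" shows "F \<noteq> {}"
proof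
  assume "F = {}"
  then have "\<Omega> {0} = 0" using assms(2) unfolding facets_def by auto
  moreover have "(0::nat) \<in> {0..n}" by simp
  ultimately show False using assms(1) unfolding wsc_def by blast
qed

lemma mfacets_finite: "finite (mfacets n \<Omega>)"
proof -
  have "facets n \<Omega> \<subseteq> Pow {0..n}" by (auto simp: facets_def)
  then have "finite (facets n \<Omega>)" by (meson finite_Pow_iff finite_atLeastAtMost finite_subset)
  moreover have "mfacets n \<Omega> \<subseteq> Sigma (facets n \<Omega>) (\<lambda>F. {..<\<Omega> F})" by (auto simp: mfacets_def)
  ultimately show ?thesis by (meson finite_SigmaI finite_lessThan finite_subset)
qed

lemma mfacets_at_sub: "mfacets_at n \<Omega> i \<subseteq> mfacets n \<Omega>"
  by (auto simp: mfacets_at_def)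

lemma mfacets_at_nonempty:
  assumes "wsc n \<Omega>" "i \<in> {0..n}" shows "mfacets_at n \<Omega> i \<noteq> {}"
proof -
  define S where "S = {T. T \<subseteq> {0..n} \<and> i \<in> T \<and> \<Omega> T \<noteq> 0}"
  have fin: "finite S" unfolding S_def by (rule finite_subset[of _ "Pow {0..n}"]) auto
  have "{i} \<in> S" using assms unfolding wsc_def S_def by auto
  then have ne: "S \<noteq> {}" by blast
  obtain T where T0: "T \<in> S" and max0: "\<forall>b\<in>S. T \<le> b \<longrightarrow> T = b"
    using finite_has_maximal[OF fin ne] by blast
  have T: "T \<subseteq> {0..n}" "i \<in> T" "\<Omega> T \<noteq> 0" using T0 by (auto simp: S_def)
  have max: "T = b" if "b \<subseteq> {0..n}" "i \<in> b" "\<Omega> b \<noteq> 0" "T \<le> b" for b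
    using max0 that by (auto simp: S_def)
  have "\<forall>T'. T \<subset> T' \<and> T' \<subseteq> {0..n} \<longrightarrow> \<Omega> T' = 0"
    using max T by blast
  then have "T \<in> facets n \<Omega>" using T unfolding facets_def by blast
  then have "(T, 0) \<in> mfacets_at n \<Omega> i" using T by (auto simp: mfacets_at_def mfacets_def)
  then show ?thesis by auto
qed

lemma (in group_action) inv_cancel:
  assumes "g \<in> carrier G" "x \<in> E" shows "\<phi> (inv g) (\<phi> g x) = x"
proof -
  have grp: "group G" using group_hom group_hom.axioms(1) by blast
  have "\<phi> (inv g) (\<phi> g x) = \<phi> (inv g \<otimes> g) x"
    using composition_rule[of x "inv g" g] assms grp by (simp add: group.inv_closed)
  also have "\<dots> = \<phi> \<one> x" using grp assms by (simp add: group.l_inv)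
  also have "\<dots> = x" using id_eq_one assms by (metis restrict_apply')
  finally show ?thesis .
qed

lemma (in group_action) inv_cancel2:
  assumes "g \<in> carrier G" "x \<in> E" shows "\<phi> g (\<phi> (inv g) x) = x"
proof -
  have grp: "group G" using group_hom group_hom.axioms(1) by blast
  have "inv g \<in> carrier G" using grp assms by (simp add: group.inv_closed)
  then show ?thesis using inv_cancel[of "inv g" x] assms grp by (simp add: group.inv_inv)
qed

lemma action_facts:
  assumes act: "wsc_action n \<Omega> G \<phi> \<psi>" and g: "g \<in> carrier G" and i: "i \<in> {0..n}"
  shows "(\<lambda>x. \<psi> (inv\<^bsub>G\<^esub> g) x) ` mfacets_at n \<Omega> (\<phi> g i) = mfacets_at n \<Omega> i"
proof -
  have a1: "group_action G {0..n} \<phi>" and a2: "group_action G (mfacets n \<Omega>) \<psi>"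
    and fst: "\<forall>g\<in>carrier G. \<forall>x\<in>mfacets n \<Omega>. fst (\<psi> g x) = \<phi> g ` fst x"
    using act by (auto simp: wsc_action_def)
  have grp: "group G" using a1 group_action.group_hom group_hom.axioms(1) by blast
  have ig: "inv\<^bsub>G\<^esub> g \<in> carrier G" using grp g by (simp add: group.inv_closed)
  have gi: "\<phi> g i \<in> {0..n}" using group_action.element_image[OF a1 g i] by blast
  have 1: "\<psi> (inv\<^bsub>G\<^esub> g) x \<in> mfacets_at n \<Omega> i" if x: "x \<in> mfacets_at n \<Omega> (\<phi> g i)" for x
  proof -
    have xm: "x \<in> mfacets n \<Omega>" and xi: "\<phi> g i \<in> fst x" using x by (auto simp: mfacets_at_def)
    have "\<psi> (inv\<^bsub>G\<^esub> g) x \<in> mfacets n \<Omega>" using group_action.element_image[OF a2 ig xm] by blast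
    moreover have "i \<in> fst (\<psi> (inv\<^bsub>G\<^esub> g) x)"
      using fst ig xm xi group_action.inv_cancel[OF a1 g i] by force
    ultimately show ?thesis by (auto simp: mfacets_at_def)
  qed
  have 2: "\<exists>x\<in>mfacets_at n \<Omega> (\<phi> g i). y = \<psi> (inv\<^bsub>G\<^esub> g) x" if y: "y \<in> mfacets_at n \<Omega> i" for y
  proof -
    have ym: "y \<in> mfacets n \<Omega>" and yi: "i \<in> fst y" using y by (auto simp: mfacets_at_def)
    have "\<psi> g y \<in> mfacets n \<Omega>" using group_action.element_image[OF a2 g ym] by blast
    moreover have "\<phi> g i \<in> fst (\<psi> g y)" using fst g ym yi by auto
    ultimately have "\<psi> g y \<in> mfacets_at n \<Omega> (\<phi> g i)" by (auto simp: mfacets_at_def)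
    moreover have "\<psi> (inv\<^bsub>G\<^esub> g) (\<psi> g y) = y" using group_action.inv_cancel[OF a2 g ym] .
    ultimately show ?thesis by metis
  qed
  show ?thesis using 1 2 by blast
qed

lemma action_facts0:
  assumes act: "wsc_action n \<Omega> G \<phi> \<psi>" and g: "g \<in> carrier G" and i: "i \<in> {0..n}"
  shows "\<phi> g i \<in> {0..n}"
proof -
  have "group_action G {0..n} \<phi>" using act by (simp add: wsc_action_def)
  then show ?thesis by (rule group_action.element_image[OF _ g i refl])
qed

lemma connect_parity:
  assumes wsc: "wsc n \<Omega>" and conn: "wsc_connected n \<Omega>"
    and loc: "\<forall>i\<in>{0..n}. (\<forall>y\<in>mfacets_at n \<Omega> i. even (\<alpha> y :: nat)) \<or> (\<forall>y\<in>mfacets_at n \<Omega> i. odd (\<alpha> y))"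
  shows "(\<forall>y\<in>mfacets n \<Omega>. even (\<alpha> y)) \<or> (\<forall>y\<in>mfacets n \<Omega>. odd (\<alpha> y))"
proof (rule ccontr)
  assume "\<not> ?thesis"
  then obtain y1 y2 where y1: "y1 \<in> mfacets n \<Omega>" "even (\<alpha> y1)" and y2: "y2 \<in> mfacets n \<Omega>" "odd (\<alpha> y2)"
    by auto
  have "fst y1 \<noteq> {}" "fst y2 \<noteq> {}" using facet_nonempty[OF wsc] y1 y2 by (auto simp: mfacets_def)
  then obtain i j where i: "i \<in> fst y1" and j: "j \<in> fst y2" by blast
  have i0: "i \<in> {0..n}" using i y1 by (force simp: mfacets_def dest: facet_props)
  have j0: "j \<in> {0..n}" using j y2 by (force simp: mfacets_def dest: facet_props)
  let ?R = "{(a, b). \<exists>F\<in>facets n \<Omega>. a \<in> F \<and> b \<in> F}"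
  have path: "(i, j) \<in> ?R\<^sup>*" using conn i0 j0 by (auto simp: wsc_connected_def)
  let ?P = "\<lambda>k. k \<in> {0..n} \<and> (\<forall>y\<in>mfacets_at n \<Omega> k. even (\<alpha> y))"
  have "?P j" using path
  proof (induction rule: rtrancl_induct)
    case base
    have "y1 \<in> mfacets_at n \<Omega> i" using y1 i by (auto simp: mfacets_at_def)
    moreover have "(\<forall>y\<in>mfacets_at n \<Omega> i. even (\<alpha> y)) \<or> (\<forall>y\<in>mfacets_at n \<Omega> i. odd (\<alpha> y))"
      using loc i0 by blast
    ultimately show ?case using y1(2) i0 by auto
  next
    case (step a b)
    then obtain F where F: "F \<in> facets n \<Omega>" "a \<in> F" "b \<in> F" by auto
    have b0: "b \<in> {0..n}" using F facet_props by blast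
    have "(F, 0) \<in> mfacets n \<Omega>" using F facet_props by (auto simp: mfacets_def)
    then have "(F,0) \<in> mfacets_at n \<Omega> a" "(F,0) \<in> mfacets_at n \<Omega> b" using F by (auto simp: mfacets_at_def)
    moreover have "(\<forall>y\<in>mfacets_at n \<Omega> b. even (\<alpha> y)) \<or> (\<forall>y\<in>mfacets_at n \<Omega> b. odd (\<alpha> y))"
      using loc b0 by blast
    moreover have "even (\<alpha> (F,0))" using step.IH \<open>(F,0) \<in> mfacets_at n \<Omega> a\<close> by blast
    ultimately show ?case using b0 by auto
  qed
  moreover have "y2 \<in> mfacets_at n \<Omega> j" using y2 j by (auto simp: mfacets_at_def)
  ultimately show False using y2(2) by auto
qed

lemma rank_le: "is_decomp n \<Omega> G \<phi> \<psi> B v I loc \<Longrightarrow> decomp_rank n \<Omega> G \<phi> \<psi> B v \<le> enat (card I)"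
  unfolding decomp_rank_def by (rule INF_lower2[of I]) auto

lemma rank_attained:
  assumes "decomp_rank n \<Omega> G \<phi> \<psi> B v \<noteq> \<infinity>"
  shows "\<exists>I loc. is_decomp n \<Omega> G \<phi> \<psi> B v I loc \<and> decomp_rank n \<Omega> G \<phi> \<psi> B v = enat (card I)"
proof -
  let ?A = "(\<lambda>I. enat (card I)) ` {I. \<exists>loc. is_decomp n \<Omega> G \<phi> \<psi> B v I loc}"
  have r: "decomp_rank n \<Omega> G \<phi> \<psi> B v = Inf ?A" by (simp add: decomp_rank_def)
  have "?A \<noteq> {}" using assms r by (auto simp: top_enat_def[symmetric])
  then obtain a where "a \<in> ?A" by blast
  then have "Inf ?A \<in> ?A" using LeastI[of "\<lambda>x. x \<in> ?A" a] \<open>?A \<noteq> {}\<close> by (simp only: Inf_enat_def if_False)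
  then obtain I loc where "is_decomp n \<Omega> G \<phi> \<psi> B v I loc" "Inf ?A = enat (card I)" by blast
  then have "is_decomp n \<Omega> G \<phi> \<psi> B v I loc \<and> decomp_rank n \<Omega> G \<phi> \<psi> B v = enat (card I)"
    unfolding r by simp
  then show ?thesis by blast
qed



lemma tprod_cong: "(\<And>i. i \<in> {0..n} \<Longrightarrow> u i = u' i) \<Longrightarrow> tprod n B u = tprod n B u'"
  unfolding tprod_def by (intro ext) (auto intro!: prod.cong)

lemma tprod_zero: assumes "i \<in> {0..n}" "u i = (\<lambda>_. 0)" shows "tprod n B u x = 0"
proof -
  have "\<exists>a\<in>{0..n}. u a (x a) = 0" using assms by (intro bexI[of _ i]) auto
  then show ?thesis unfolding tprod_def by (auto intro!: prod_zero)
qed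

lemma loc_space_zero: "(\<lambda>_. 0) \<in> loc_space X"
  by (simp add: loc_space_def)

lemma sum_decomp:
  assumes wsc: "wsc n \<Omega>" and conn: "wsc_connected n \<Omega>" and act: "wsc_action n \<Omega> G \<phi> \<psi>"
    and dv: "is_decomp n \<Omega> G \<phi> \<psi> B v I lv" and dw: "is_decomp n \<Omega> G \<phi> \<psi> B w J lw"
  shows "\<exists>loc. is_decomp n \<Omega> G \<phi> \<psi> B (\<lambda>x. v x + w x) ((\<lambda>a. 2*a) ` I \<union> (\<lambda>b. 2*b+1) ` J) loc"
proof -
  define Ft where "Ft = mfacets n \<Omega>"
  define Fi where "Fi = mfacets_at n \<Omega>"
  define K where "K = (\<lambda>a. 2*a) ` I \<union> (\<lambda>b. 2*b+1) ` J"
  define loc where "loc = (\<lambda>i (\<beta> :: nat set \<times> nat \<Rightarrow> nat).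
     if \<forall>y\<in>Fi i. even (\<beta> y) then lv i (\<lambda>y\<in>Fi i. \<beta> y div 2)
     else if \<forall>y\<in>Fi i. odd (\<beta> y) then lw i (\<lambda>y\<in>Fi i. \<beta> y div 2) else (\<lambda>_. 0))"
  have finI: "finite I" and finJ: "finite J" using dv dw by (auto simp: is_decomp_def)
  have lvs: "\<And>i \<beta>. i \<in> {0..n} \<Longrightarrow> \<beta> \<in> Fi i \<rightarrow>\<^sub>E I \<Longrightarrow> lv i \<beta> \<in> loc_space (B i)"
    using dv by (auto simp: is_decomp_def Fi_def)
  have lws: "\<And>i \<beta>. i \<in> {0..n} \<Longrightarrow> \<beta> \<in> Fi i \<rightarrow>\<^sub>E J \<Longrightarrow> lw i \<beta> \<in> loc_space (B i)"
    using dw by (auto simp: is_decomp_def Fi_def)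
  have veq: "v = (\<lambda>x. \<Sum>\<alpha>\<in>Ft \<rightarrow>\<^sub>E I. tprod n B (\<lambda>i. lv i (restrict \<alpha> (Fi i))) x)"
    using dv by (simp add: is_decomp_def Fi_def Ft_def)
  have weq: "w = (\<lambda>x. \<Sum>\<alpha>\<in>Ft \<rightarrow>\<^sub>E J. tprod n B (\<lambda>i. lw i (restrict \<alpha> (Fi i))) x)"
    using dw by (simp add: is_decomp_def Fi_def Ft_def)
  have vsym: "\<And>i g \<beta>. i \<in> {0..n} \<Longrightarrow> g \<in> carrier G \<Longrightarrow> \<beta> \<in> Fi i \<rightarrow>\<^sub>E I \<Longrightarrow>
      lv i \<beta> = lv (\<phi> g i) (\<lambda>x\<in>Fi (\<phi> g i). \<beta> (\<psi> (inv\<^bsub>G\<^esub> g) x))"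
    using dv by (simp add: is_decomp_def Fi_def)
  have wsym: "\<And>i g \<beta>. i \<in> {0..n} \<Longrightarrow> g \<in> carrier G \<Longrightarrow> \<beta> \<in> Fi i \<rightarrow>\<^sub>E J \<Longrightarrow>
      lw i \<beta> = lw (\<phi> g i) (\<lambda>x\<in>Fi (\<phi> g i). \<beta> (\<psi> (inv\<^bsub>G\<^esub> g) x))"
    using dw by (simp add: is_decomp_def Fi_def)
  have Fine: "\<And>i. i \<in> {0..n} \<Longrightarrow> Fi i \<noteq> {}" using mfacets_at_nonempty[OF wsc] by (simp add: Fi_def)
  have FiFt: "\<And>i. Fi i \<subseteq> Ft" using mfacets_at_sub by (simp add: Fi_def Ft_def)
  have finFt: "finite Ft" using mfacets_finite by (simp add: Ft_def)
  have Ftne: "Ft \<noteq> {}" using Fine[of 0] FiFt[of 0] by auto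
  have decE: "(\<lambda>y\<in>D. \<beta> y div 2) \<in> D \<rightarrow>\<^sub>E I" if "\<beta> \<in> D \<rightarrow>\<^sub>E K" "\<forall>y\<in>D. even (\<beta> y)" for \<beta> D
  proof -
    have "\<beta> y div 2 \<in> I" if "y \<in> D" for y
    proof -
      have "\<beta> y \<in> K" using \<open>\<beta> \<in> D \<rightarrow>\<^sub>E K\<close> that by auto
      moreover have "even (\<beta> y)" using \<open>\<forall>y\<in>D. even (\<beta> y)\<close> that by auto
      ultimately show ?thesis unfolding K_def by auto
    qed
    then show ?thesis by auto
  qed
  have decO: "(\<lambda>y\<in>D. \<beta> y div 2) \<in> D \<rightarrow>\<^sub>E J" if "\<beta> \<in> D \<rightarrow>\<^sub>E K" "\<forall>y\<in>D. odd (\<beta> y)" for \<beta> D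
  proof -
    have "\<beta> y div 2 \<in> J" if "y \<in> D" for y
    proof -
      have "\<beta> y \<in> K" using \<open>\<beta> \<in> D \<rightarrow>\<^sub>E K\<close> that by auto
      moreover have "odd (\<beta> y)" using \<open>\<forall>y\<in>D. odd (\<beta> y)\<close> that by auto
      ultimately show ?thesis unfolding K_def by auto
    qed
    then show ?thesis by auto
  qed
  have locs: "loc i \<beta> \<in> loc_space (B i)" if "i \<in> {0..n}" "\<beta> \<in> Fi i \<rightarrow>\<^sub>E K" for i \<beta>
  proof (cases "\<forall>y\<in>Fi i. even (\<beta> y)")
    case True
    then show ?thesis unfolding loc_def using lvs[OF that(1) decE[OF that(2) True]] by simp
  next
    case False
    note F = this
    show ?thesis
    proof (cases "\<forall>y\<in>Fi i. odd (\<beta> y)")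
      case True
      then show ?thesis unfolding loc_def using F lws[OF that(1) decO[OF that(2) True]] by simp
    next
      case False
      have "loc i \<beta> = (\<lambda>_. 0)" unfolding loc_def by (simp only: if_not_P[OF F] if_not_P[OF False])
      then show ?thesis using loc_space_zero by simp
    qed
  qed
  have locsym: "loc i \<beta> = loc (\<phi> g i) (\<lambda>x\<in>Fi (\<phi> g i). \<beta> (\<psi> (inv\<^bsub>G\<^esub> g) x))"
    if i: "i \<in> {0..n}" and g: "g \<in> carrier G" and \<beta>: "\<beta> \<in> Fi i \<rightarrow>\<^sub>E K" for i g \<beta>
  proof -
    define \<beta>' where "\<beta>' = (\<lambda>x\<in>Fi (\<phi> g i). \<beta> (\<psi> (inv\<^bsub>G\<^esub> g) x))"
    have im: "(\<lambda>x. \<psi> (inv\<^bsub>G\<^esub> g) x) ` Fi (\<phi> g i) = Fi i"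
      using action_facts[OF act g i] by (simp add: Fi_def)
    have ev: "(\<forall>y\<in>Fi (\<phi> g i). even (\<beta>' y)) \<longleftrightarrow> (\<forall>y\<in>Fi i. even (\<beta> y))"
    proof -
      have "(\<forall>y\<in>Fi (\<phi> g i). even (\<beta>' y)) \<longleftrightarrow> (\<forall>x\<in>Fi (\<phi> g i). even (\<beta> (\<psi> (inv\<^bsub>G\<^esub> g) x)))"
        by (simp add: \<beta>'_def)
      also have "\<dots> \<longleftrightarrow> (\<forall>y\<in>(\<lambda>x. \<psi> (inv\<^bsub>G\<^esub> g) x) ` Fi (\<phi> g i). even (\<beta> y))" by simp
      finally show ?thesis using im by simp
    qed
    have od: "(\<forall>y\<in>Fi (\<phi> g i). odd (\<beta>' y)) \<longleftrightarrow> (\<forall>y\<in>Fi i. odd (\<beta> y))"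
    proof -
      have "(\<forall>y\<in>Fi (\<phi> g i). odd (\<beta>' y)) \<longleftrightarrow> (\<forall>x\<in>Fi (\<phi> g i). odd (\<beta> (\<psi> (inv\<^bsub>G\<^esub> g) x)))"
        by (simp add: \<beta>'_def)
      also have "\<dots> \<longleftrightarrow> (\<forall>y\<in>(\<lambda>x. \<psi> (inv\<^bsub>G\<^esub> g) x) ` Fi (\<phi> g i). odd (\<beta> y))" by simp
      finally show ?thesis using im by simp
    qed
    have dec: "(\<lambda>y\<in>Fi (\<phi> g i). \<beta>' y div 2) = (\<lambda>x\<in>Fi (\<phi> g i). (\<lambda>y\<in>Fi i. \<beta> y div 2) (\<psi> (inv\<^bsub>G\<^esub> g) x))"
    proof (rule restrict_ext)
      fix x assume x: "x \<in> Fi (\<phi> g i)"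
      then have "\<psi> (inv\<^bsub>G\<^esub> g) x \<in> Fi i" using im by blast
      then show "\<beta>' x div 2 = (\<lambda>y\<in>Fi i. \<beta> y div 2) (\<psi> (inv\<^bsub>G\<^esub> g) x)" using x by (simp add: \<beta>'_def)
    qed
    show ?thesis
      unfolding \<beta>'_def[symmetric] unfolding loc_def ev od dec
      using vsym[OF i g decE[OF \<beta>]] wsym[OF i g decO[OF \<beta>]] by auto
  qed
  define enc where "enc = (\<lambda>a. \<lambda>y\<in>Ft. 2 * a y :: nat)"
  define enc' where "enc' = (\<lambda>a. \<lambda>y\<in>Ft. 2 * a y + 1 :: nat)"
  have encK: "enc a \<in> Ft \<rightarrow>\<^sub>E K" if "a \<in> Ft \<rightarrow>\<^sub>E I" for a using that by (auto simp: enc_def K_def)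
  have encK': "enc' a \<in> Ft \<rightarrow>\<^sub>E K" if "a \<in> Ft \<rightarrow>\<^sub>E J" for a using that by (auto simp: enc'_def K_def)
  have inj: "inj_on enc (Ft \<rightarrow>\<^sub>E I)"
  proof (rule inj_onI)
    fix a b assume a: "a \<in> Ft \<rightarrow>\<^sub>E I" and b: "b \<in> Ft \<rightarrow>\<^sub>E I" and e: "enc a = enc b"
    show "a = b"
    proof (rule PiE_ext[OF a b])
      fix y assume "y \<in> Ft" then show "a y = b y" using fun_cong[OF e, of y] by (simp add: enc_def)
    qed
  qed
  have inj': "inj_on enc' (Ft \<rightarrow>\<^sub>E J)"
  proof (rule inj_onI)
    fix a b assume a: "a \<in> Ft \<rightarrow>\<^sub>E J" and b: "b \<in> Ft \<rightarrow>\<^sub>E J" and e: "enc' a = enc' b"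
    show "a = b"
    proof (rule PiE_ext[OF a b])
      fix y assume "y \<in> Ft" then show "a y = b y" using fun_cong[OF e, of y] by (simp add: enc'_def)
    qed
  qed
  have disj: "enc ` (Ft \<rightarrow>\<^sub>E I) \<inter> enc' ` (Ft \<rightarrow>\<^sub>E J) = {}"
  proof (rule ccontr)
    assume "\<not> ?thesis"
    then obtain a b where "enc a = enc' b" by auto
    moreover obtain y0 where "y0 \<in> Ft" using Ftne by auto
    ultimately have "enc a y0 = enc' b y0" "y0 \<in> Ft" by auto
    then have "2 * a y0 = 2 * b y0 + 1" by (simp add: enc_def enc'_def)
    then show False by presburger
  qed
  have Tenc: "tprod n B (\<lambda>i. loc i (restrict (enc a) (Fi i))) = tprod n B (\<lambda>i. lv i (restrict a (Fi i)))"
    for a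
  proof (rule tprod_cong)
    fix i assume i: "i \<in> {0..n}"
    have r: "restrict (enc a) (Fi i) = (\<lambda>y\<in>Fi i. 2 * a y)" using FiFt[of i] by (simp add: enc_def Int_absorb1)
    have "(\<lambda>y\<in>Fi i. restrict (enc a) (Fi i) y div 2) = restrict a (Fi i)" unfolding r by auto
    then show "loc i (restrict (enc a) (Fi i)) = lv i (restrict a (Fi i))"
      unfolding loc_def using r by auto
  qed
  have Tenc': "tprod n B (\<lambda>i. loc i (restrict (enc' a) (Fi i))) = tprod n B (\<lambda>i. lw i (restrict a (Fi i)))"
    for a
  proof (rule tprod_cong)
    fix i assume i: "i \<in> {0..n}"
    have r: "restrict (enc' a) (Fi i) = (\<lambda>y\<in>Fi i. 2 * a y + 1)" using FiFt[of i] by (simp add: enc'_def Int_absorb1)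
    have "(\<lambda>y\<in>Fi i. restrict (enc' a) (Fi i) y div 2) = restrict a (Fi i)" unfolding r by auto
    moreover have "\<not> (\<forall>y\<in>Fi i. even (restrict (enc' a) (Fi i) y))" using Fine[OF i] r by auto
    ultimately show "loc i (restrict (enc' a) (Fi i)) = lw i (restrict a (Fi i))"
      unfolding loc_def using r by auto
  qed
  have Tzero: "tprod n B (\<lambda>i. loc i (restrict \<alpha> (Fi i))) x = 0"
    if \<alpha>: "\<alpha> \<in> (Ft \<rightarrow>\<^sub>E K) - (enc ` (Ft \<rightarrow>\<^sub>E I) \<union> enc' ` (Ft \<rightarrow>\<^sub>E J))" for \<alpha> x
  proof -
    have \<alpha>K: "\<alpha> \<in> Ft \<rightarrow>\<^sub>E K" using \<alpha> by auto
    have "\<exists>i\<in>{0..n}. \<not> ((\<forall>y\<in>Fi i. even (\<alpha> y)) \<or> (\<forall>y\<in>Fi i. odd (\<alpha> y)))"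
    proof (rule ccontr)
      assume "\<not> ?thesis"
      then have "(\<forall>y\<in>Ft. even (\<alpha> y)) \<or> (\<forall>y\<in>Ft. odd (\<alpha> y))"
        using connect_parity[OF wsc conn, of \<alpha>] by (simp add: Fi_def Ft_def)
      then show False
      proof
        assume e: "\<forall>y\<in>Ft. even (\<alpha> y)"
        have "\<alpha> = enc (\<lambda>y\<in>Ft. \<alpha> y div 2)"
          using \<alpha>K e by (auto simp: enc_def PiE_iff extensional_def intro!: ext)
        moreover have "(\<lambda>y\<in>Ft. \<alpha> y div 2) \<in> Ft \<rightarrow>\<^sub>E I" using decE[OF \<alpha>K e] .
        ultimately show False using \<alpha> by blast
      next
        assume e: "\<forall>y\<in>Ft. odd (\<alpha> y)"
        have "\<alpha> = enc' (\<lambda>y\<in>Ft. \<alpha> y div 2)"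
          using \<alpha>K e by (auto simp: enc'_def PiE_iff extensional_def intro!: ext)
        moreover have "(\<lambda>y\<in>Ft. \<alpha> y div 2) \<in> Ft \<rightarrow>\<^sub>E J" using decO[OF \<alpha>K e] .
        ultimately show False using \<alpha> by blast
      qed
    qed
    then obtain i where i: "i \<in> {0..n}" and np: "\<not> ((\<forall>y\<in>Fi i. even (\<alpha> y)) \<or> (\<forall>y\<in>Fi i. odd (\<alpha> y)))"
      by blast
    have "loc i (restrict \<alpha> (Fi i)) = (\<lambda>_. 0)" using np unfolding loc_def by auto
    then show ?thesis by (rule tprod_zero[OF i])
  qed
  have eq: "(\<lambda>x. v x + w x) = (\<lambda>x. \<Sum>\<alpha>\<in>Ft \<rightarrow>\<^sub>E K. tprod n B (\<lambda>i. loc i (restrict \<alpha> (Fi i))) x)"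
  proof (rule ext)
    fix x
    let ?T = "\<lambda>\<alpha>. tprod n B (\<lambda>i. loc i (restrict \<alpha> (Fi i))) x"
    have finK: "finite (Ft \<rightarrow>\<^sub>E K)" using finFt finI finJ by (auto simp: K_def intro!: finite_PiE)
    have sub: "enc ` (Ft \<rightarrow>\<^sub>E I) \<union> enc' ` (Ft \<rightarrow>\<^sub>E J) \<subseteq> Ft \<rightarrow>\<^sub>E K" using encK encK' by auto
    have "(\<Sum>\<alpha>\<in>Ft \<rightarrow>\<^sub>E K. ?T \<alpha>) = (\<Sum>\<alpha>\<in>enc ` (Ft \<rightarrow>\<^sub>E I) \<union> enc' ` (Ft \<rightarrow>\<^sub>E J). ?T \<alpha>)"
      by (rule sum.mono_neutral_right[OF finK sub]) (use Tzero in blast)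
    also have "\<dots> = (\<Sum>\<alpha>\<in>enc ` (Ft \<rightarrow>\<^sub>E I). ?T \<alpha>) + (\<Sum>\<alpha>\<in>enc' ` (Ft \<rightarrow>\<^sub>E J). ?T \<alpha>)"
      by (rule sum.union_disjoint) (use finFt finI finJ disj in \<open>auto intro: finite_PiE\<close>)
    also have "(\<Sum>\<alpha>\<in>enc ` (Ft \<rightarrow>\<^sub>E I). ?T \<alpha>) = v x"
      unfolding sum.reindex[OF inj] veq by (simp add: Tenc)
    also have "(\<Sum>\<alpha>\<in>enc' ` (Ft \<rightarrow>\<^sub>E J). ?T \<alpha>) = w x"
      unfolding sum.reindex[OF inj'] weq by (simp add: Tenc')
    finally show "v x + w x = (\<Sum>\<alpha>\<in>Ft \<rightarrow>\<^sub>E K. ?T \<alpha>)" by (rule sym)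
  qed
  have "is_decomp n \<Omega> G \<phi> \<psi> B (\<lambda>x. v x + w x) K loc"
    unfolding is_decomp_def
    using finI finJ locs locsym eq by (simp add: K_def Fi_def Ft_def)
  then show ?thesis unfolding K_def by blast
qed



definition supp :: "('a \<Rightarrow> complex) \<Rightarrow> 'a set" where "supp f = {x. f x \<noteq> 0}"

lemma ls_add: "a \<in> loc_space X \<Longrightarrow> b \<in> loc_space X \<Longrightarrow> (\<lambda>x. a x + b x) \<in> loc_space X"
proof -
  assume a: "a \<in> loc_space X" and b: "b \<in> loc_space X"
  have "{x. a x + b x \<noteq> 0} \<subseteq> {x. a x \<noteq> 0} \<union> {x. b x \<noteq> 0}" by auto
  then show ?thesis using a b unfolding loc_space_def by (auto intro: finite_subset)
qed

lemma ls_scal: "a \<in> loc_space X \<Longrightarrow> (\<lambda>x. c * a x) \<in> loc_space X"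
proof -
  assume a: "a \<in> loc_space X"
  have "{x. c * a x \<noteq> 0} \<subseteq> {x. a x \<noteq> 0}" by auto
  then show ?thesis using a unfolding loc_space_def by (auto intro: finite_subset)
qed

lemma ls_basis: "b \<in> X \<Longrightarrow> basis_vec b \<in> loc_space X"
proof -
  assume "b \<in> X"
  moreover have "{c. basis_vec b c \<noteq> 0} = {b}" by (auto simp: basis_vec_def)
  ultimately show ?thesis unfolding loc_space_def by simp
qed

lemma ls_sum: "finite A \<Longrightarrow> (\<forall>a\<in>A. f a \<in> loc_space X) \<Longrightarrow> (\<lambda>x. \<Sum>a\<in>A. c a * f a x) \<in> loc_space X"
proof (induction A rule: finite_induct)
  case empty
  then show ?case using loc_space_zero by simp
next
  case (insert a A)
  have "(\<lambda>x. \<Sum>a\<in>insert a A. c a * f a x) = (\<lambda>x. c a * f a x + (\<Sum>a\<in>A. c a * f a x))"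
    using insert.hyps by simp
  moreover have "(\<lambda>x. c a * f a x) \<in> loc_space X" using insert.prems ls_scal[of "f a" X "c a"] by simp
  moreover have "(\<lambda>x. \<Sum>a\<in>A. c a * f a x) \<in> loc_space X" using insert by simp
  ultimately show ?case using ls_add[of "\<lambda>x. c a * f a x" X "\<lambda>x. \<Sum>a\<in>A. c a * f a x"] by simp
qed

lemma alg_ax:
  assumes "cplx_algebra S m"
  shows "\<And>a b. a \<in> S \<Longrightarrow> b \<in> S \<Longrightarrow> m a b \<in> S"
    and "\<And>a b c. a \<in> S \<Longrightarrow> b \<in> S \<Longrightarrow> c \<in> S \<Longrightarrow> m (\<lambda>x. a x + b x) c = (\<lambda>x. m a c x + m b c x)"
    and "\<And>a b c. a \<in> S \<Longrightarrow> b \<in> S \<Longrightarrow> c \<in> S \<Longrightarrow> m a (\<lambda>x. b x + c x) = (\<lambda>x. m a b x + m a c x)"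
    and "\<And>s a b. a \<in> S \<Longrightarrow> b \<in> S \<Longrightarrow> m (\<lambda>x. s * a x) b = (\<lambda>x. s * m a b x)"
    and "\<And>s a b. a \<in> S \<Longrightarrow> b \<in> S \<Longrightarrow> m a (\<lambda>x. s * b x) = (\<lambda>x. s * m a b x)"
  using assms unfolding cplx_algebra_def by blast+

lemma ls_supp: "u \<in> loc_space X \<Longrightarrow> finite (supp u) \<and> supp u \<subseteq> X"
  by (simp add: loc_space_def supp_def)

lemma alg_left:
  assumes alg: "cplx_algebra (loc_space X) m"
  shows "finite A \<Longrightarrow> (\<forall>a\<in>A. f a \<in> loc_space X) \<Longrightarrow> b \<in> loc_space X \<Longrightarrow>
    m (\<lambda>x. \<Sum>a\<in>A. c a * f a x) b = (\<lambda>x. \<Sum>a\<in>A. c a * m (f a) b x)"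
proof (induction A rule: finite_induct)
  case empty
  have "m (\<lambda>x. 0 * b x) b = (\<lambda>x. 0 * m b b x)" using alg_ax(4)[OF alg empty.prems(2) empty.prems(2)] .
  then show ?case by simp
next
  case (insert a A)
  have s1: "(\<lambda>x. c a * f a x) \<in> loc_space X" using insert.prems ls_scal[of "f a" X "c a"] by auto
  have s2: "(\<lambda>x. \<Sum>a\<in>A. c a * f a x) \<in> loc_space X" using insert.prems insert.hyps ls_sum by auto
  have "m (\<lambda>x. \<Sum>a\<in>insert a A. c a * f a x) b = m (\<lambda>x. (\<lambda>x. c a * f a x) x + (\<lambda>x. \<Sum>a\<in>A. c a * f a x) x) b"
    using insert.hyps by simp
  also have "\<dots> = (\<lambda>x. m (\<lambda>x. c a * f a x) b x + m (\<lambda>x. \<Sum>a\<in>A. c a * f a x) b x)"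
    using alg_ax(2)[OF alg s1 s2 insert.prems(2)] .
  finally have e1: "m (\<lambda>x. \<Sum>a\<in>insert a A. c a * f a x) b = (\<lambda>x. m (\<lambda>x. c a * f a x) b x + m (\<lambda>x. \<Sum>a\<in>A. c a * f a x) b x)" .
  have e2: "m (\<lambda>x. c a * f a x) b = (\<lambda>x. c a * m (f a) b x)"
    using alg_ax(4)[OF alg _ insert.prems(2), of "f a" "c a"] insert.prems(1) by simp
  have e3: "m (\<lambda>x. \<Sum>a\<in>A. c a * f a x) b = (\<lambda>x. \<Sum>a\<in>A. c a * m (f a) b x)"
  proof -
    have "\<forall>a\<in>A. f a \<in> loc_space X" using insert.prems(1) by simp
    then show ?thesis by (rule insert.IH[OF _ insert.prems(2)])
  qed
  show ?case unfolding e1 e2 e3 using insert.hyps by simp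
qed

lemma alg_right:
  assumes alg: "cplx_algebra (loc_space X) m"
  shows "finite A \<Longrightarrow> (\<forall>a\<in>A. f a \<in> loc_space X) \<Longrightarrow> b \<in> loc_space X \<Longrightarrow>
    m b (\<lambda>x. \<Sum>a\<in>A. c a * f a x) = (\<lambda>x. \<Sum>a\<in>A. c a * m b (f a) x)"
proof (induction A rule: finite_induct)
  case empty
  have "m b (\<lambda>x. 0 * b x) = (\<lambda>x. 0 * m b b x)" using alg_ax(5)[OF alg empty.prems(2) empty.prems(2)] .
  then show ?case by simp
next
  case (insert a A)
  have s1: "(\<lambda>x. c a * f a x) \<in> loc_space X" using insert.prems ls_scal[of "f a" X "c a"] by auto
  have s2: "(\<lambda>x. \<Sum>a\<in>A. c a * f a x) \<in> loc_space X" using insert.prems insert.hyps ls_sum by auto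
  have "m b (\<lambda>x. \<Sum>a\<in>insert a A. c a * f a x) = m b (\<lambda>x. (\<lambda>x. c a * f a x) x + (\<lambda>x. \<Sum>a\<in>A. c a * f a x) x)"
    using insert.hyps by simp
  also have "\<dots> = (\<lambda>x. m b (\<lambda>x. c a * f a x) x + m b (\<lambda>x. \<Sum>a\<in>A. c a * f a x) x)"
    using alg_ax(3)[OF alg insert.prems(2) s1 s2] .
  finally have e1: "m b (\<lambda>x. \<Sum>a\<in>insert a A. c a * f a x) = (\<lambda>x. m b (\<lambda>x. c a * f a x) x + m b (\<lambda>x. \<Sum>a\<in>A. c a * f a x) x)" .
  have e2: "m b (\<lambda>x. c a * f a x) = (\<lambda>x. c a * m b (f a) x)"
    using alg_ax(5)[OF alg insert.prems(2), of "f a" "c a"] insert.prems(1) by simp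
  have e3: "m b (\<lambda>x. \<Sum>a\<in>A. c a * f a x) = (\<lambda>x. \<Sum>a\<in>A. c a * m b (f a) x)"
  proof -
    have "\<forall>a\<in>A. f a \<in> loc_space X" using insert.prems(1) by simp
    then show ?thesis by (rule insert.IH[OF _ insert.prems(2)])
  qed
  show ?case unfolding e1 e2 e3 using insert.hyps by simp
qed

lemma expand: assumes "u \<in> loc_space X" shows "u = (\<lambda>x. \<Sum>a\<in>supp u. u a * basis_vec a x)"
proof (rule ext)
  fix x
  have fin: "finite (supp u)" using ls_supp[OF assms] by blast
  have "(\<Sum>a\<in>supp u. u a * basis_vec a x) = (\<Sum>a\<in>supp u. if a = x then u x else 0)"
    by (rule sum.cong) (auto simp: basis_vec_def)
  also have "\<dots> = u x" using fin by (simp add: sum.delta' supp_def)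
  finally show "u x = (\<Sum>a\<in>supp u. u a * basis_vec a x)" by simp
qed

lemma bilin:
  assumes alg: "cplx_algebra (loc_space X) m" and u: "u \<in> loc_space X" and u': "u' \<in> loc_space X"
  shows "m u u' x = (\<Sum>a\<in>supp u. \<Sum>b\<in>supp u'. u a * u' b * m (basis_vec a) (basis_vec b) x)"
proof -
  have f1: "finite (supp u)" "supp u \<subseteq> X" using ls_supp[OF u] by auto
  have f2: "finite (supp u')" "supp u' \<subseteq> X" using ls_supp[OF u'] by auto
  have b1: "\<forall>a\<in>supp u. basis_vec a \<in> loc_space X" using f1(2) by (auto intro!: ls_basis)
  have b2: "\<forall>a\<in>supp u'. basis_vec a \<in> loc_space X" using f2(2) by (auto intro!: ls_basis)
  have "m u u' = m (\<lambda>x. \<Sum>a\<in>supp u. u a * basis_vec a x) u'"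
    by (rule arg_cong[where f = "\<lambda>z. m z u'"], rule expand[OF u])
  also have "\<dots> = (\<lambda>x. \<Sum>a\<in>supp u. u a * m (basis_vec a) u' x)"
    by (rule alg_left[OF alg f1(1) b1 u'])
  finally have 1: "m u u' x = (\<Sum>a\<in>supp u. u a * m (basis_vec a) u' x)" by simp
  have 2: "m (basis_vec a) u' x = (\<Sum>b\<in>supp u'. u' b * m (basis_vec a) (basis_vec b) x)" if "a \<in> supp u" for a
  proof -
    have "m (basis_vec a) u' = m (basis_vec a) (\<lambda>x. \<Sum>b\<in>supp u'. u' b * basis_vec b x)"
      by (rule arg_cong[where f = "m (basis_vec a)"], rule expand[OF u'])
    also have "\<dots> = (\<lambda>x. \<Sum>b\<in>supp u'. u' b * m (basis_vec a) (basis_vec b) x)"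
      by (rule alg_right[OF alg f2(1) b2]) (use b1 that in blast)
    finally show ?thesis by simp
  qed
  show ?thesis unfolding 1 using 2 by (simp add: sum_distrib_left mult.assoc)
qed



lemma tm_eq:
  assumes "finite S" "{y. v y \<noteq> 0} \<subseteq> S" "finite T" "{z. w z \<noteq> 0} \<subseteq> T"
  shows "tensor_mult n B m v w x = (\<Sum>y\<in>S. \<Sum>z\<in>T. v y * w z * tprod n B (\<lambda>i. m i (basis_vec (y i)) (basis_vec (z i))) x)"
proof -
  let ?P = "\<lambda>y z. tprod n B (\<lambda>i. m i (basis_vec (y i)) (basis_vec (z i))) x"
  have "tensor_mult n B m v w x = (\<Sum>y\<in>{y. v y \<noteq> 0}. \<Sum>z\<in>{z. w z \<noteq> 0}. v y * w z * ?P y z)"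
    by (simp add: tensor_mult_def)
  also have "\<dots> = (\<Sum>y\<in>S. \<Sum>z\<in>{z. w z \<noteq> 0}. v y * w z * ?P y z)"
    by (rule sum.mono_neutral_left) (use assms in auto)
  also have "\<dots> = (\<Sum>y\<in>S. \<Sum>z\<in>T. v y * w z * ?P y z)"
    by (rule sum.cong[OF refl], rule sum.mono_neutral_left) (use assms in auto)
  finally show ?thesis .
qed

lemma sum_supp_sub:
  "{y. (\<Sum>a\<in>A. f a y) \<noteq> (0::complex)} \<subseteq> (\<Union>a\<in>A. {y. f a y \<noteq> 0})"
proof
  fix y assume "y \<in> {y. (\<Sum>a\<in>A. f a y) \<noteq> 0}"
  then have "(\<Sum>a\<in>A. f a y) \<noteq> 0" by simp
  then have "\<exists>a\<in>A. f a y \<noteq> 0" by (meson sum.neutral)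
  then show "y \<in> (\<Union>a\<in>A. {y. f a y \<noteq> 0})" by blast
qed

lemma tm_bilin:
  assumes fA: "finite A" and fC: "finite C" and ff: "\<And>a. a \<in> A \<Longrightarrow> finite {y. f a y \<noteq> 0}"
    and fg: "\<And>c. c \<in> C \<Longrightarrow> finite {z. g c z \<noteq> 0}"
  shows "tensor_mult n B m (\<lambda>y. \<Sum>a\<in>A. f a y) (\<lambda>z. \<Sum>c\<in>C. g c z) x
       = (\<Sum>a\<in>A. \<Sum>c\<in>C. tensor_mult n B m (f a) (g c) x)"
proof -
  define S where "S = (\<Union>a\<in>A. {y. f a y \<noteq> 0})"
  define T where "T = (\<Union>c\<in>C. {z. g c z \<noteq> 0})"
  define P where "P = (\<lambda>y z. tprod n B (\<lambda>i. m i (basis_vec (y i)) (basis_vec (z i))) x)"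
  have fS: "finite S" using fA ff by (simp add: S_def)
  have fT: "finite T" using fC fg by (simp add: T_def)
  have "tensor_mult n B m (\<lambda>y. \<Sum>a\<in>A. f a y) (\<lambda>z. \<Sum>c\<in>C. g c z) x
     = (\<Sum>y\<in>S. \<Sum>z\<in>T. (\<Sum>a\<in>A. f a y) * (\<Sum>c\<in>C. g c z) * P y z)"
    unfolding P_def by (rule tm_eq[OF fS _ fT]) (simp_all add: S_def T_def sum_supp_sub)
  also have "\<dots> = (\<Sum>y\<in>S. \<Sum>z\<in>T. \<Sum>a\<in>A. \<Sum>c\<in>C. f a y * g c z * P y z)"
    by (simp add: sum_distrib_left sum_distrib_right mult.assoc sum.swap[of _ C A])
  also have "\<dots> = (\<Sum>y\<in>S. \<Sum>a\<in>A. \<Sum>z\<in>T. \<Sum>c\<in>C. f a y * g c z * P y z)"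
    by (rule sum.cong[OF refl], rule sum.swap)
  also have "\<dots> = (\<Sum>a\<in>A. \<Sum>y\<in>S. \<Sum>z\<in>T. \<Sum>c\<in>C. f a y * g c z * P y z)"
    by (rule sum.swap)
  also have "\<dots> = (\<Sum>a\<in>A. \<Sum>y\<in>S. \<Sum>c\<in>C. \<Sum>z\<in>T. f a y * g c z * P y z)"
    by (rule sum.cong[OF refl], rule sum.cong[OF refl], rule sum.swap)
  also have "\<dots> = (\<Sum>a\<in>A. \<Sum>c\<in>C. \<Sum>y\<in>S. \<Sum>z\<in>T. f a y * g c z * P y z)"
    by (rule sum.cong[OF refl], rule sum.swap)
  also have "\<dots> = (\<Sum>a\<in>A. \<Sum>c\<in>C. tensor_mult n B m (f a) (g c) x)"
  proof (rule sum.cong[OF refl], rule sum.cong[OF refl])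
    fix a c assume a: "a \<in> A" and c: "c \<in> C"
    show "(\<Sum>y\<in>S. \<Sum>z\<in>T. f a y * g c z * P y z) = tensor_mult n B m (f a) (g c) x"
      unfolding P_def by (rule tm_eq[OF fS _ fT, symmetric]) (use a c in \<open>auto simp: S_def T_def\<close>)
  qed
  finally show ?thesis .
qed

lemma tprod_supp:
  assumes "\<forall>i\<in>{0..n}. u i \<in> loc_space (B i)"
  shows "{y. tprod n B u y \<noteq> 0} \<subseteq> PiE {0..n} (\<lambda>i. supp (u i))"
proof
  fix y assume "y \<in> {y. tprod n B u y \<noteq> 0}"
  then have y: "y \<in> PiE {0..n} B" and p: "(\<Prod>i\<in>{0..n}. u i (y i)) \<noteq> 0"
    by (auto simp: tprod_def split: if_splits)
  have "u i (y i) \<noteq> 0" if "i \<in> {0..n}" for i using p that by (meson finite_atLeastAtMost prod_zero)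
  then show "y \<in> PiE {0..n} (\<lambda>i. supp (u i))" using y by (auto simp: supp_def PiE_iff)
qed

lemma tprod_fin:
  assumes "\<forall>i\<in>{0..n}. u i \<in> loc_space (B i)"
  shows "finite {y. tprod n B u y \<noteq> 0}"
proof (rule finite_subset[OF tprod_supp[OF assms]])
  show "finite (PiE {0..n} (\<lambda>i. supp (u i)))" using assms ls_supp by (auto intro!: finite_PiE)
qed

lemma tm_tprod:
  assumes alg: "\<forall>i\<in>{0..n}. cplx_algebra (loc_space (B i)) (m i)"
    and u: "\<forall>i\<in>{0..n}. u i \<in> loc_space (B i)" and u': "\<forall>i\<in>{0..n}. u' i \<in> loc_space (B i)"
  shows "tensor_mult n B m (tprod n B u) (tprod n B u') x = tprod n B (\<lambda>i. m i (u i) (u' i)) x"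
proof -
  define Y where "Y = PiE {0..n} (\<lambda>i. supp (u i))"
  define Z where "Z = PiE {0..n} (\<lambda>i. supp (u' i))"
  define P where "P = (\<lambda>y z. tprod n B (\<lambda>i. m i (basis_vec (y i)) (basis_vec (z i))) x)"
  have fY: "finite Y" unfolding Y_def using u ls_supp by (auto intro!: finite_PiE)
  have fZ: "finite Z" unfolding Z_def using u' ls_supp by (auto intro!: finite_PiE)
  have YB: "Y \<subseteq> PiE {0..n} B" unfolding Y_def using u ls_supp by (auto intro!: PiE_mono)
  have ZB: "Z \<subseteq> PiE {0..n} B" unfolding Z_def using u' ls_supp by (auto intro!: PiE_mono)
  have tm: "tensor_mult n B m (tprod n B u) (tprod n B u') x
      = (\<Sum>y\<in>Y. \<Sum>z\<in>Z. tprod n B u y * tprod n B u' z * P y z)"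
    unfolding P_def by (rule tm_eq[OF fY _ fZ]) (use tprod_supp[OF u] tprod_supp[OF u'] in \<open>simp_all add: Y_def Z_def\<close>)
  show ?thesis
  proof (cases "x \<in> PiE {0..n} B")
    case False
    then show ?thesis unfolding tm by (simp add: tprod_def P_def)
  next
    case True
    define H where "H i a b = u i a * u' i b * m i (basis_vec a) (basis_vec b) (x i)" for i a b
    have fin: "\<And>i. i \<in> {0..n} \<Longrightarrow> finite (supp (u i))" using u ls_supp by blast
    have fin': "\<And>i. i \<in> {0..n} \<Longrightarrow> finite (supp (u' i))" using u' ls_supp by blast
    have 1: "tprod n B u y * tprod n B u' z * P y z = (\<Prod>i\<in>{0..n}. H i (y i) (z i))"
      if "y \<in> Y" "z \<in> Z" for y z
      using that YB ZB True by (auto simp: tprod_def P_def H_def prod.distrib)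
    have "tensor_mult n B m (tprod n B u) (tprod n B u') x = (\<Sum>y\<in>Y. \<Sum>z\<in>Z. \<Prod>i\<in>{0..n}. H i (y i) (z i))"
      unfolding tm using 1 by simp
    also have "\<dots> = (\<Sum>y\<in>Y. \<Prod>i\<in>{0..n}. \<Sum>b\<in>supp (u' i). H i (y i) b)"
    proof (rule sum.cong[OF refl])
      fix y
      show "(\<Sum>z\<in>Z. \<Prod>i\<in>{0..n}. H i (y i) (z i)) = (\<Prod>i\<in>{0..n}. \<Sum>b\<in>supp (u' i). H i (y i) b)"
        unfolding Z_def using prod_sum_PiE[of "{0..n}" "\<lambda>i. supp (u' i)" "\<lambda>i b. H i (y i) b", OF finite_atLeastAtMost fin']
        by simp
    qed
    also have "\<dots> = (\<Prod>i\<in>{0..n}. \<Sum>a\<in>supp (u i). \<Sum>b\<in>supp (u' i). H i a b)"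
      unfolding Y_def using prod_sum_PiE[of "{0..n}" "\<lambda>i. supp (u i)" "\<lambda>i a. \<Sum>b\<in>supp (u' i). H i a b", OF finite_atLeastAtMost fin]
      by simp
    also have "\<dots> = (\<Prod>i\<in>{0..n}. m i (u i) (u' i) (x i))"
    proof (rule prod.cong[OF refl])
      fix i assume i: "i \<in> {0..n}"
      show "(\<Sum>a\<in>supp (u i). \<Sum>b\<in>supp (u' i). H i a b) = m i (u i) (u' i) (x i)"
        unfolding H_def using bilin[of "B i" "m i" "u i" "u' i" "x i"] alg u u' i by simp
    qed
    also have "\<dots> = tprod n B (\<lambda>i. m i (u i) (u' i)) x" using True by (simp add: tprod_def)
    finally show ?thesis .
  qed
qed



lemma prod_decomp:
  assumes act: "wsc_action n \<Omega> G \<phi> \<psi>"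
    and alg: "\<forall>i\<in>{0..n}. cplx_algebra (loc_space (B i)) (m i)"
    and msym: "\<forall>g\<in>carrier G. \<forall>i\<in>{0..n}. \<forall>a\<in>loc_space (B i). \<forall>b\<in>loc_space (B i). m (\<phi> g i) a b = m i a b"
    and dv: "is_decomp n \<Omega> G \<phi> \<psi> B v I lv" and dw: "is_decomp n \<Omega> G \<phi> \<psi> B w J lw"
  shows "\<exists>loc. is_decomp n \<Omega> G \<phi> \<psi> B (tensor_mult n B m v w) (prod_encode ` (I \<times> J)) loc"
proof -
  define Ft where "Ft = mfacets n \<Omega>"
  define Fi where "Fi = mfacets_at n \<Omega>"
  define K where "K = prod_encode ` (I \<times> J)"
  define loc where "loc = (\<lambda>i (\<beta> :: nat set \<times> nat \<Rightarrow> nat).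
     m i (lv i (\<lambda>y\<in>Fi i. fst (prod_decode (\<beta> y)))) (lw i (\<lambda>y\<in>Fi i. snd (prod_decode (\<beta> y)))))"
  have finI: "finite I" and finJ: "finite J" using dv dw by (auto simp: is_decomp_def)
  have lvs: "\<And>i \<beta>. i \<in> {0..n} \<Longrightarrow> \<beta> \<in> Fi i \<rightarrow>\<^sub>E I \<Longrightarrow> lv i \<beta> \<in> loc_space (B i)"
    using dv by (auto simp: is_decomp_def Fi_def)
  have lws: "\<And>i \<beta>. i \<in> {0..n} \<Longrightarrow> \<beta> \<in> Fi i \<rightarrow>\<^sub>E J \<Longrightarrow> lw i \<beta> \<in> loc_space (B i)"
    using dw by (auto simp: is_decomp_def Fi_def)
  have veq: "v = (\<lambda>x. \<Sum>\<alpha>\<in>Ft \<rightarrow>\<^sub>E I. tprod n B (\<lambda>i. lv i (restrict \<alpha> (Fi i))) x)"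
    using dv by (simp add: is_decomp_def Fi_def Ft_def)
  have weq: "w = (\<lambda>x. \<Sum>\<alpha>\<in>Ft \<rightarrow>\<^sub>E J. tprod n B (\<lambda>i. lw i (restrict \<alpha> (Fi i))) x)"
    using dw by (simp add: is_decomp_def Fi_def Ft_def)
  have vsym: "\<And>i g \<beta>. i \<in> {0..n} \<Longrightarrow> g \<in> carrier G \<Longrightarrow> \<beta> \<in> Fi i \<rightarrow>\<^sub>E I \<Longrightarrow>
      lv i \<beta> = lv (\<phi> g i) (\<lambda>x\<in>Fi (\<phi> g i). \<beta> (\<psi> (inv\<^bsub>G\<^esub> g) x))"
    using dv by (simp add: is_decomp_def Fi_def)
  have wsym: "\<And>i g \<beta>. i \<in> {0..n} \<Longrightarrow> g \<in> carrier G \<Longrightarrow> \<beta> \<in> Fi i \<rightarrow>\<^sub>E J \<Longrightarrow>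
      lw i \<beta> = lw (\<phi> g i) (\<lambda>x\<in>Fi (\<phi> g i). \<beta> (\<psi> (inv\<^bsub>G\<^esub> g) x))"
    using dw by (simp add: is_decomp_def Fi_def)
  have FiFt: "\<And>i. Fi i \<subseteq> Ft" using mfacets_at_sub by (simp add: Fi_def Ft_def)
  have finFt: "finite Ft" using mfacets_finite by (simp add: Ft_def)
  have dec1: "(\<lambda>y\<in>D. fst (prod_decode (\<beta> y))) \<in> D \<rightarrow>\<^sub>E I" if "\<beta> \<in> D \<rightarrow>\<^sub>E K" for \<beta> D
  proof -
    have "fst (prod_decode (\<beta> y)) \<in> I" if "y \<in> D" for y
    proof -
      have "\<beta> y \<in> K" using \<open>\<beta> \<in> D \<rightarrow>\<^sub>E K\<close> that by auto
      then show ?thesis unfolding K_def by auto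
    qed
    then show ?thesis by auto
  qed
  have dec2: "(\<lambda>y\<in>D. snd (prod_decode (\<beta> y))) \<in> D \<rightarrow>\<^sub>E J" if "\<beta> \<in> D \<rightarrow>\<^sub>E K" for \<beta> D
  proof -
    have "snd (prod_decode (\<beta> y)) \<in> J" if "y \<in> D" for y
    proof -
      have "\<beta> y \<in> K" using \<open>\<beta> \<in> D \<rightarrow>\<^sub>E K\<close> that by auto
      then show ?thesis unfolding K_def by auto
    qed
    then show ?thesis by auto
  qed
  have locs: "loc i \<beta> \<in> loc_space (B i)" if i: "i \<in> {0..n}" and \<beta>: "\<beta> \<in> Fi i \<rightarrow>\<^sub>E K" for i \<beta>
    unfolding loc_def
    by (rule alg_ax(1)[OF alg[rule_format, OF i] lvs[OF i dec1[OF \<beta>]] lws[OF i dec2[OF \<beta>]]])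
  have locsym: "loc i \<beta> = loc (\<phi> g i) (\<lambda>x\<in>Fi (\<phi> g i). \<beta> (\<psi> (inv\<^bsub>G\<^esub> g) x))"
    if i: "i \<in> {0..n}" and g: "g \<in> carrier G" and \<beta>: "\<beta> \<in> Fi i \<rightarrow>\<^sub>E K" for i g \<beta>
  proof -
    define \<beta>' where "\<beta>' = (\<lambda>x\<in>Fi (\<phi> g i). \<beta> (\<psi> (inv\<^bsub>G\<^esub> g) x))"
    have im: "(\<lambda>x. \<psi> (inv\<^bsub>G\<^esub> g) x) ` Fi (\<phi> g i) = Fi i"
      using action_facts[OF act g i] by (simp add: Fi_def)
    have e1: "(\<lambda>y\<in>Fi (\<phi> g i). fst (prod_decode (\<beta>' y))) = (\<lambda>x\<in>Fi (\<phi> g i). (\<lambda>y\<in>Fi i. fst (prod_decode (\<beta> y))) (\<psi> (inv\<^bsub>G\<^esub> g) x))"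
    proof (rule restrict_ext)
      fix x assume x: "x \<in> Fi (\<phi> g i)"
      then have "\<psi> (inv\<^bsub>G\<^esub> g) x \<in> Fi i" using im by blast
      then show "fst (prod_decode (\<beta>' x)) = (\<lambda>y\<in>Fi i. fst (prod_decode (\<beta> y))) (\<psi> (inv\<^bsub>G\<^esub> g) x)"
        using x by (simp add: \<beta>'_def)
    qed
    have e2: "(\<lambda>y\<in>Fi (\<phi> g i). snd (prod_decode (\<beta>' y))) = (\<lambda>x\<in>Fi (\<phi> g i). (\<lambda>y\<in>Fi i. snd (prod_decode (\<beta> y))) (\<psi> (inv\<^bsub>G\<^esub> g) x))"
    proof (rule restrict_ext)
      fix x assume x: "x \<in> Fi (\<phi> g i)"
      then have "\<psi> (inv\<^bsub>G\<^esub> g) x \<in> Fi i" using im by blast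
      then show "snd (prod_decode (\<beta>' x)) = (\<lambda>y\<in>Fi i. snd (prod_decode (\<beta> y))) (\<psi> (inv\<^bsub>G\<^esub> g) x)"
        using x by (simp add: \<beta>'_def)
    qed
    have "loc (\<phi> g i) \<beta>' = m (\<phi> g i) (lv i (\<lambda>y\<in>Fi i. fst (prod_decode (\<beta> y)))) (lw i (\<lambda>y\<in>Fi i. snd (prod_decode (\<beta> y))))"
      unfolding loc_def e1 e2 using vsym[OF i g dec1[OF \<beta>]] wsym[OF i g dec2[OF \<beta>]] by simp
    also have "\<dots> = loc i \<beta>" unfolding loc_def
      using msym g i lvs[OF i dec1[OF \<beta>]] lws[OF i dec2[OF \<beta>]] by blast
    finally show ?thesis unfolding \<beta>'_def by simp
  qed
  define pr where "pr = (\<lambda>(a, c). \<lambda>y\<in>Ft. prod_encode (a y, c y))"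
  define up where "up = (\<lambda>\<alpha>. ((\<lambda>y\<in>Ft. fst (prod_decode (\<alpha> y))), (\<lambda>y\<in>Ft. snd (prod_decode (\<alpha> y)))))"
  have restr: "restrict a (Fi i) \<in> Fi i \<rightarrow>\<^sub>E X" if "a \<in> Ft \<rightarrow>\<^sub>E X" for a X i
    using that FiFt[of i] by auto
  have Tpr: "tprod n B (\<lambda>i. loc i (restrict (pr (a, c)) (Fi i)))
      = tprod n B (\<lambda>i. m i (lv i (restrict a (Fi i))) (lw i (restrict c (Fi i))))" for a c
  proof (rule tprod_cong)
    fix i assume i: "i \<in> {0..n}"
    have r: "restrict (pr (a, c)) (Fi i) = (\<lambda>y\<in>Fi i. prod_encode (a y, c y))"
      using FiFt[of i] by (simp add: pr_def Int_absorb1)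
    show "loc i (restrict (pr (a, c)) (Fi i)) = m i (lv i (restrict a (Fi i))) (lw i (restrict c (Fi i)))"
      unfolding loc_def r by (simp cong: restrict_cong)
  qed
  have eq: "tensor_mult n B m v w = (\<lambda>x. \<Sum>\<alpha>\<in>Ft \<rightarrow>\<^sub>E K. tprod n B (\<lambda>i. loc i (restrict \<alpha> (Fi i))) x)"
  proof (rule ext)
    fix x
    have lvs': "\<forall>i\<in>{0..n}. lv i (restrict a (Fi i)) \<in> loc_space (B i)" if "a \<in> Ft \<rightarrow>\<^sub>E I" for a
      using lvs restr[OF that] by blast
    have lws': "\<forall>i\<in>{0..n}. lw i (restrict c (Fi i)) \<in> loc_space (B i)" if "c \<in> Ft \<rightarrow>\<^sub>E J" for c
      using lws restr[OF that] by blast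
    have "tensor_mult n B m v w x = (\<Sum>a\<in>Ft \<rightarrow>\<^sub>E I. \<Sum>c\<in>Ft \<rightarrow>\<^sub>E J.
        tensor_mult n B m (tprod n B (\<lambda>i. lv i (restrict a (Fi i)))) (tprod n B (\<lambda>i. lw i (restrict c (Fi i)))) x)"
      unfolding veq weq
      by (rule tm_bilin[of "Ft \<rightarrow>\<^sub>E I" "Ft \<rightarrow>\<^sub>E J" "\<lambda>a. tprod n B (\<lambda>i. lv i (restrict a (Fi i)))"
            "\<lambda>c. tprod n B (\<lambda>i. lw i (restrict c (Fi i)))"])
         (use finFt finI finJ in \<open>auto intro: finite_PiE\<close>, erule tprod_fin[OF lvs'], erule tprod_fin[OF lws'])
    also have "\<dots> = (\<Sum>a\<in>Ft \<rightarrow>\<^sub>E I. \<Sum>c\<in>Ft \<rightarrow>\<^sub>E J.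
        tprod n B (\<lambda>i. m i (lv i (restrict a (Fi i))) (lw i (restrict c (Fi i)))) x)"
      by (rule sum.cong[OF refl], rule sum.cong[OF refl], rule tm_tprod[OF alg]) (use lvs' lws' in auto)
    also have "\<dots> = (\<Sum>p\<in>(Ft \<rightarrow>\<^sub>E I) \<times> (Ft \<rightarrow>\<^sub>E J).
        tprod n B (\<lambda>i. loc i (restrict (pr p) (Fi i))) x)"
    proof -
      have "\<And>p. tprod n B (\<lambda>i. loc i (restrict (pr p) (Fi i))) x
          = tprod n B (\<lambda>i. m i (lv i (restrict (fst p) (Fi i))) (lw i (restrict (snd p) (Fi i)))) x"
        subgoal for p using Tpr[of "fst p" "snd p"] by simp
        done
      then show ?thesis by (simp add: sum.cartesian_product split_def)
    qed
    also have "\<dots> = (\<Sum>\<alpha>\<in>Ft \<rightarrow>\<^sub>E K. tprod n B (\<lambda>i. loc i (restrict \<alpha> (Fi i))) x)"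
    proof (rule sum.reindex_bij_witness[where i = up and j = pr])
      fix p assume p: "p \<in> (Ft \<rightarrow>\<^sub>E I) \<times> (Ft \<rightarrow>\<^sub>E J)"
      obtain a c where pc: "p = (a, c)" by (cases p)
      have a: "a \<in> Ft \<rightarrow>\<^sub>E I" and c: "c \<in> Ft \<rightarrow>\<^sub>E J" using p pc by auto
      show "up (pr p) = p" unfolding pc up_def pr_def
        using a c by (auto simp: PiE_iff extensional_def intro!: ext)
      show "pr p \<in> Ft \<rightarrow>\<^sub>E K" unfolding pc pr_def K_def using a c by auto
    next
      fix \<alpha> assume \<alpha>: "\<alpha> \<in> Ft \<rightarrow>\<^sub>E K"
      show "pr (up \<alpha>) = \<alpha>" unfolding up_def pr_def
        using \<alpha> by (auto simp: PiE_iff extensional_def intro!: ext)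
      show "up \<alpha> \<in> (Ft \<rightarrow>\<^sub>E I) \<times> (Ft \<rightarrow>\<^sub>E J)" unfolding up_def using dec1[OF \<alpha>] dec2[OF \<alpha>] by simp
    next
      fix p
      show "tprod n B (\<lambda>i. loc i (restrict (pr p) (Fi i))) x = tprod n B (\<lambda>i. loc i (restrict (pr p) (Fi i))) x"
        by (rule refl)
    qed
    finally show "tensor_mult n B m v w x = (\<Sum>\<alpha>\<in>Ft \<rightarrow>\<^sub>E K. tprod n B (\<lambda>i. loc i (restrict \<alpha> (Fi i))) x)" .
  qed
  have "is_decomp n \<Omega> G \<phi> \<psi> B (tensor_mult n B m v w) K loc"
    unfolding is_decomp_def
    using finI finJ locs locsym eq by (simp add: K_def Fi_def Ft_def)
  then show ?thesis unfolding K_def by blast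
qed



lemma rank0_zero:
  assumes wsc: "wsc n \<Omega>" and r: "decomp_rank n \<Omega> G \<phi> \<psi> B v = 0"
  shows "v = (\<lambda>_. 0)"
proof -
  obtain I loc where d: "is_decomp n \<Omega> G \<phi> \<psi> B v I loc" and c: "decomp_rank n \<Omega> G \<phi> \<psi> B v = enat (card I)"
    using rank_attained[of n \<Omega> G \<phi> \<psi> B v] r by (auto simp: zero_enat_def)
  have "finite I" using d by (simp add: is_decomp_def)
  moreover have "card I = 0" using c r by (simp add: zero_enat_def)
  ultimately have I: "I = {}" by simp
  have "mfacets_at n \<Omega> 0 \<noteq> {}" using mfacets_at_nonempty[OF wsc] by simp
  then have "mfacets n \<Omega> \<noteq> {}" using mfacets_at_sub by blast
  then obtain y where y: "y \<in> mfacets n \<Omega>" by blast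
  then have "mfacets n \<Omega> \<rightarrow>\<^sub>E I = {}" using I by (auto simp: PiE_iff)
  then show ?thesis using d by (simp add: is_decomp_def)
qed

lemma zero_rank:
  assumes wsc: "wsc n \<Omega>"
  shows "decomp_rank n \<Omega> G \<phi> \<psi> B (\<lambda>_. 0) = 0"
proof -
  have "mfacets_at n \<Omega> 0 \<noteq> {}" using mfacets_at_nonempty[OF wsc] by simp
  then have "mfacets n \<Omega> \<noteq> {}" using mfacets_at_sub by blast
  then obtain y where y: "y \<in> mfacets n \<Omega>" by blast
  then have e: "mfacets n \<Omega> \<rightarrow>\<^sub>E ({}::nat set) = {}" by (auto simp: PiE_iff)
  have "is_decomp n \<Omega> G \<phi> \<psi> B (\<lambda>_. 0) {} (\<lambda>_ _ _. 0)"
    unfolding is_decomp_def using e by (simp add: loc_space_zero)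
  then have "decomp_rank n \<Omega> G \<phi> \<psi> B (\<lambda>_. 0) \<le> enat 0" using rank_le by fastforce
  then show ?thesis by (simp add: zero_enat_def[symmetric])
qed

theorem proposition3p9:
  fixes n :: nat and \<Omega> :: "nat set \<Rightarrow> nat"
    and G :: "('g, 'm) monoid_scheme" and \<phi> :: "'g \<Rightarrow> nat \<Rightarrow> nat"
    and \<psi> :: "'g \<Rightarrow> (nat set \<times> nat) \<Rightarrow> (nat set \<times> nat)"
    and B :: "nat \<Rightarrow> 'b set"
  assumes "wsc n \<Omega>"
    and "wsc_connected n \<Omega>"
    and "wsc_action n \<Omega> G \<phi> \<psi>"
    and "\<forall>g\<in>carrier G. \<forall>i\<in>{0..n}. B (\<phi> g i) = B i"
  shows "(\<forall>v\<in>tensor_space n B. \<forall>w\<in>tensor_space n B.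
            decomp_rank n \<Omega> G \<phi> \<psi> B (\<lambda>x. v x + w x)
              \<le> decomp_rank n \<Omega> G \<phi> \<psi> B v + decomp_rank n \<Omega> G \<phi> \<psi> B w) \<and>
         (\<forall>m. (\<forall>i\<in>{0..n}. cplx_algebra (loc_space (B i)) (m i)) \<and>
              (\<forall>g\<in>carrier G. \<forall>i\<in>{0..n}. \<forall>a\<in>loc_space (B i). \<forall>b\<in>loc_space (B i).
                  m (\<phi> g i) a b = m i a b) \<longrightarrow>
            (\<forall>v\<in>tensor_space n B. \<forall>w\<in>tensor_space n B.
               decomp_rank n \<Omega> G \<phi> \<psi> B (tensor_mult n B m v w)
                 \<le> decomp_rank n \<Omega> G \<phi> \<psi> B v * decomp_rank n \<Omega> G \<phi> \<psi> B w))"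
proof (intro conjI ballI allI impI)
  note wsc = assms(1) and conn = assms(2) and act = assms(3)
  let ?r = "decomp_rank n \<Omega> G \<phi> \<psi> B"
  fix v w :: "(nat \<Rightarrow> 'b) \<Rightarrow> complex"
  show "?r (\<lambda>x. v x + w x) \<le> ?r v + ?r w"
  proof (cases "?r v = \<infinity> \<or> ?r w = \<infinity>")
    case True
    then show ?thesis by auto
  next
    case False
    then obtain I lv J lw where dv: "is_decomp n \<Omega> G \<phi> \<psi> B v I lv" "?r v = enat (card I)"
      and dw: "is_decomp n \<Omega> G \<phi> \<psi> B w J lw" "?r w = enat (card J)"
      using rank_attained[of n \<Omega> G \<phi> \<psi> B v] rank_attained[of n \<Omega> G \<phi> \<psi> B w] by blast
    have fI: "finite I" and fJ: "finite J" using dv dw by (auto simp: is_decomp_def)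
    obtain loc where d: "is_decomp n \<Omega> G \<phi> \<psi> B (\<lambda>x. v x + w x) ((\<lambda>a. 2*a) ` I \<union> (\<lambda>b. 2*b+1) ` J) loc"
      using sum_decomp[OF wsc conn act dv(1) dw(1)] by blast
    have disj: "(\<lambda>a. 2*a) ` I \<inter> (\<lambda>b. 2*b+1) ` J = {}" by auto presburger
    have "card ((\<lambda>a. 2*a) ` I \<union> (\<lambda>b. 2*b+1) ` J) = card ((\<lambda>a. 2*a) ` I) + card ((\<lambda>b. 2*b+1) ` J)"
      using fI fJ disj by (simp add: card_Un_disjoint)
    also have "\<dots> = card I + card J" by (simp add: card_image inj_on_def)
    finally have c: "card ((\<lambda>a. 2*a) ` I \<union> (\<lambda>b. 2*b+1) ` J) = card I + card J" .
    have "?r (\<lambda>x. v x + w x) \<le> enat (card I + card J)" using rank_le[OF d] c by simp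
    then show ?thesis using dv(2) dw(2) by simp
  qed
next
  note wsc = assms(1) and conn = assms(2) and act = assms(3)
  let ?r = "decomp_rank n \<Omega> G \<phi> \<psi> B"
  fix m :: "nat \<Rightarrow> ('b \<Rightarrow> complex) \<Rightarrow> ('b \<Rightarrow> complex) \<Rightarrow> ('b \<Rightarrow> complex)"
  fix v w :: "(nat \<Rightarrow> 'b) \<Rightarrow> complex"
  assume mass: "(\<forall>i\<in>{0..n}. cplx_algebra (loc_space (B i)) (m i)) \<and>
              (\<forall>g\<in>carrier G. \<forall>i\<in>{0..n}. \<forall>a\<in>loc_space (B i). \<forall>b\<in>loc_space (B i).
                  m (\<phi> g i) a b = m i a b)"
  show "?r (tensor_mult n B m v w) \<le> ?r v * ?r w"
  proof (cases "?r v = 0 \<or> ?r w = 0")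
    case True
    then have "tensor_mult n B m v w = (\<lambda>_. 0)"
    proof
      assume "?r v = 0"
      then have "v = (\<lambda>_. 0)" by (rule rank0_zero[OF wsc])
      then show ?thesis by (simp add: tensor_mult_def)
    next
      assume "?r w = 0"
      then have "w = (\<lambda>_. 0)" by (rule rank0_zero[OF wsc])
      then show ?thesis by (simp add: tensor_mult_def)
    qed
    moreover have "?r (\<lambda>_. 0) = 0" by (rule zero_rank[OF wsc])
    ultimately show ?thesis by simp
  next
    case False
    note nz = this
    show ?thesis
    proof (cases "?r v = \<infinity> \<or> ?r w = \<infinity>")
      case True
      have "?r v * ?r w = \<infinity>" using True nz by (auto simp: imult_is_infinity)
      then show ?thesis by simp
    next
      case False
      then obtain I lv J lw where dv: "is_decomp n \<Omega> G \<phi> \<psi> B v I lv" "?r v = enat (card I)"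
        and dw: "is_decomp n \<Omega> G \<phi> \<psi> B w J lw" "?r w = enat (card J)"
        using rank_attained[of n \<Omega> G \<phi> \<psi> B v] rank_attained[of n \<Omega> G \<phi> \<psi> B w] by blast
      have fI: "finite I" and fJ: "finite J" using dv dw by (auto simp: is_decomp_def)
      obtain loc where d: "is_decomp n \<Omega> G \<phi> \<psi> B (tensor_mult n B m v w) (prod_encode ` (I \<times> J)) loc"
        using prod_decomp[OF act conjunct1[OF mass] conjunct2[OF mass] dv(1) dw(1)] by blast
      have c: "card (prod_encode ` (I \<times> J)) = card I * card J"
        by (simp add: card_image inj_prod_encode card_cartesian_product)
      have "?r (tensor_mult n B m v w) \<le> enat (card I * card J)" using rank_le[OF d] c by simp
      then show ?thesis using dv(2) dw(2) by simp
    qed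
  qed
qed

end
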